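(* If a graph $G$ is coarsely bottlenecked, then the natural map $f:G\to G_{\lambda,k}$ is a quasi-isometry for all $\lambda$ and all $k$.
   Context: All graphs are connected (and unbounded); multi-edges are allowed; $d$ is the graph metric on vertices. Sets $X,Y$ are $M$-disjoint if $d(x,y)>M$ for all $x\in X,y\in Y$; $X$ is $M$-connected if any two of its points are joined by a finite sequence in $X$ with consecutive distances $\le M$; $N_M(S)=\{y:d(s,y)<M\text{ for some }s\in S\}$. $G$ is $M$-fat $n$-bottlenecked if for any two connected $M$-disjoint subgraphs $X,Y\subset G$ there is $S\subset V(G)\setminus(V(X)\cup V(Y))$ with $|S|=n$ such that every path from a vertex of $X$ to a vertex of $Y$ meets $N_M(S)$; $G$ is coarsely bottlenecked if this holds for some $M,n\in\mathbb N$. Skeleton $G_{\lambda,k}$ (root $x_0\in V(G)$, scale $\lambda\ge1$, connectivity $k\ge1$): layers $A_{N,\lambda}=\{x: N\lambda<d(x,x_0)\le(N+1)\lambda\}$, $N\in\mathbb Z$; blocks are the maximal $k$-connected subsets of layers; $G_{\lambda,k}$ has a vertex per block and an edge between two blocks iff an edge of $G$ joins them. The natural map $f$ sends each vertex of $G$ to its block. *)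

theory Defs
  imports Complex_Main
begin

text \<open>A graph is given by a vertex set V and a symmetric adjacency relation E
  (multi-edges are irrelevant for the graph metric).\<close>

definition walk :: "('a \<Rightarrow> 'a \<Rightarrow> bool) \<Rightarrow> 'a list \<Rightarrow> bool" where
  "walk E xs \<longleftrightarrow> xs \<noteq> [] \<and> (\<forall>i. Suc i < length xs \<longrightarrow> E (xs ! i) (xs ! Suc i))"

definition gpath :: "('a \<Rightarrow> 'a \<Rightarrow> bool) \<Rightarrow> 'a list \<Rightarrow> bool" where
  "gpath E xs \<longleftrightarrow> walk E xs \<and> distinct xs"

definition gdist :: "('a \<Rightarrow> 'a \<Rightarrow> bool) \<Rightarrow> 'a \<Rightarrow> 'a \<Rightarrow> nat" where
  "gdist E x y = (LEAST n. \<exists>xs. walk E xs \<and> hd xs = x \<and> last xs = y \<and> length xs = Suc n)"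

definition graph :: "'a set \<Rightarrow> ('a \<Rightarrow> 'a \<Rightarrow> bool) \<Rightarrow> bool" where
  "graph V E \<longleftrightarrow> (\<forall>x y. E x y \<longrightarrow> x \<in> V \<and> y \<in> V \<and> E y x)"

definition connected_graph :: "'a set \<Rightarrow> ('a \<Rightarrow> 'a \<Rightarrow> bool) \<Rightarrow> bool" where
  "connected_graph V E \<longleftrightarrow> V \<noteq> {} \<and>
     (\<forall>x\<in>V. \<forall>y\<in>V. \<exists>xs. walk E xs \<and> hd xs = x \<and> last xs = y)"

definition unbounded_graph :: "'a set \<Rightarrow> ('a \<Rightarrow> 'a \<Rightarrow> bool) \<Rightarrow> bool" where
  "unbounded_graph V E \<longleftrightarrow> (\<forall>n. \<exists>x\<in>V. \<exists>y\<in>V. gdist E x y > n)"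

definition connected_subgraph :: "'a set \<Rightarrow> ('a \<Rightarrow> 'a \<Rightarrow> bool) \<Rightarrow> 'a set \<Rightarrow> bool" where
  "connected_subgraph V E S \<longleftrightarrow> S \<noteq> {} \<and> S \<subseteq> V \<and>
     (\<forall>x\<in>S. \<forall>y\<in>S. \<exists>xs. walk E xs \<and> set xs \<subseteq> S \<and> hd xs = x \<and> last xs = y)"

definition M_disjoint :: "('a \<Rightarrow> 'a \<Rightarrow> bool) \<Rightarrow> nat \<Rightarrow> 'a set \<Rightarrow> 'a set \<Rightarrow> bool" where
  "M_disjoint E M X Y \<longleftrightarrow> (\<forall>x\<in>X. \<forall>y\<in>Y. gdist E x y > M)"

definition nbhd :: "'a set \<Rightarrow> ('a \<Rightarrow> 'a \<Rightarrow> bool) \<Rightarrow> nat \<Rightarrow> 'a set \<Rightarrow> 'a set" where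
  "nbhd V E M S = {y\<in>V. \<exists>s\<in>S. gdist E s y < M}"

definition fat_bottlenecked :: "'a set \<Rightarrow> ('a \<Rightarrow> 'a \<Rightarrow> bool) \<Rightarrow> nat \<Rightarrow> nat \<Rightarrow> bool" where
  "fat_bottlenecked V E M n \<longleftrightarrow>
     (\<forall>X Y. connected_subgraph V E X \<and> connected_subgraph V E Y \<and> M_disjoint E M X Y \<longrightarrow>
        (\<exists>S. S \<subseteq> V - (X \<union> Y) \<and> finite S \<and> card S = n \<and>
           (\<forall>xs. gpath E xs \<and> hd xs \<in> X \<and> last xs \<in> Y \<longrightarrow>
                 (\<exists>v\<in>set xs. v \<in> nbhd V E M S))))"

definition coarsely_bottlenecked :: "'a set \<Rightarrow> ('a \<Rightarrow> 'a \<Rightarrow> bool) \<Rightarrow> bool" where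
  "coarsely_bottlenecked V E \<longleftrightarrow> (\<exists>M n. fat_bottlenecked V E M n)"

definition M_connected :: "('a \<Rightarrow> 'a \<Rightarrow> bool) \<Rightarrow> real \<Rightarrow> 'a set \<Rightarrow> bool" where
  "M_connected E M X \<longleftrightarrow> (\<forall>x\<in>X. \<forall>y\<in>X. \<exists>xs. xs \<noteq> [] \<and> set xs \<subseteq> X \<and> hd xs = x \<and> last xs = y \<and>
       (\<forall>i. Suc i < length xs \<longrightarrow> real (gdist E (xs ! i) (xs ! Suc i)) \<le> M))"

definition layer :: "'a set \<Rightarrow> ('a \<Rightarrow> 'a \<Rightarrow> bool) \<Rightarrow> 'a \<Rightarrow> real \<Rightarrow> int \<Rightarrow> 'a set" where
  "layer V E x0 lam N = {x\<in>V. real_of_int N * lam < real (gdist E x x0) \<and>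
                                real (gdist E x x0) \<le> (real_of_int N + 1) * lam}"

definition is_block :: "'a set \<Rightarrow> ('a \<Rightarrow> 'a \<Rightarrow> bool) \<Rightarrow> 'a \<Rightarrow> real \<Rightarrow> real \<Rightarrow> 'a set \<Rightarrow> bool" where
  "is_block V E x0 lam k B \<longleftrightarrow> B \<noteq> {} \<and>
     (\<exists>N. B \<subseteq> layer V E x0 lam N \<and> M_connected E k B \<and>
          (\<forall>B'. B \<subseteq> B' \<and> B' \<subseteq> layer V E x0 lam N \<and> M_connected E k B' \<longrightarrow> B' = B))"

definition skel_V :: "'a set \<Rightarrow> ('a \<Rightarrow> 'a \<Rightarrow> bool) \<Rightarrow> 'a \<Rightarrow> real \<Rightarrow> real \<Rightarrow> 'a set set" where
  "skel_V V E x0 lam k = {B. is_block V E x0 lam k B}"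

definition skel_E :: "'a set \<Rightarrow> ('a \<Rightarrow> 'a \<Rightarrow> bool) \<Rightarrow> 'a \<Rightarrow> real \<Rightarrow> real \<Rightarrow> 'a set \<Rightarrow> 'a set \<Rightarrow> bool" where
  "skel_E V E x0 lam k B B' \<longleftrightarrow> is_block V E x0 lam k B \<and> is_block V E x0 lam k B' \<and>
     (\<exists>x\<in>B. \<exists>y\<in>B'. E x y)"

definition skel_map :: "'a set \<Rightarrow> ('a \<Rightarrow> 'a \<Rightarrow> bool) \<Rightarrow> 'a \<Rightarrow> real \<Rightarrow> real \<Rightarrow> 'a \<Rightarrow> 'a set" where
  "skel_map V E x0 lam k x = (THE B. is_block V E x0 lam k B \<and> x \<in> B)"

definition quasi_isometry ::
  "'a set \<Rightarrow> ('a \<Rightarrow> 'a \<Rightarrow> nat) \<Rightarrow> 'b set \<Rightarrow> ('b \<Rightarrow> 'b \<Rightarrow> nat) \<Rightarrow> ('a \<Rightarrow> 'b) \<Rightarrow> bool" where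
  "quasi_isometry V d V' d' f \<longleftrightarrow> (f ` V \<subseteq> V') \<and>
     (\<exists>L C::real. L \<ge> 1 \<and> C \<ge> 0 \<and>
        (\<forall>x\<in>V. \<forall>y\<in>V. real (d x y) / L - C \<le> real (d' (f x) (f y)) \<and>
                        real (d' (f x) (f y)) \<le> L * real (d x y) + C) \<and>
        (\<forall>y\<in>V'. \<exists>x\<in>V. real (d' (f x) y) \<le> C))"

end

theory Submission
  imports Defs
begin


lemma walk_succ: "walk E xs \<longleftrightarrow> xs \<noteq> [] \<and> successively E xs"
  unfolding walk_def successively_conv_nth by simp

lemma walk_single[simp]: "walk E [x]"
  by (simp add: walk_succ)

lemma walk_Cons2[simp]: "walk E (x # y # xs) \<longleftrightarrow> E x y \<and> walk E (y # xs)"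
  by (simp add: walk_succ)

lemma walk_join:
  assumes "walk E xs" "walk E ys" "last xs = hd ys"
  shows "walk E (xs @ tl ys)" "hd (xs @ tl ys) = hd xs" "last (xs @ tl ys) = last ys"
    "set (xs @ tl ys) \<subseteq> set xs \<union> set ys" "length (xs @ tl ys) = length xs + length ys - 1"
proof -
  from assms obtain y ys' where ys: "ys = y # ys'" by (cases ys) (auto simp: walk_succ)
  show "walk E (xs @ tl ys)"
    using assms ys by (cases ys') (auto simp: walk_succ successively_append_iff successively_Cons)
  show "hd (xs @ tl ys) = hd xs" using assms by (auto simp: walk_succ)
  show "last (xs @ tl ys) = last ys" using assms ys by (cases ys') auto
  show "set (xs @ tl ys) \<subseteq> set xs \<union> set ys" using ys by auto
  show "length (xs @ tl ys) = length xs + length ys - 1" using ys assms by (auto simp: walk_succ)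
qed

lemma walk_rev:
  assumes "graph V E" "walk E xs" shows "walk E (rev xs)"
proof -
  have "successively (\<lambda>x y. E y x) xs" using assms
    by (auto simp: walk_succ graph_def elim!: successively_mono)
  then show ?thesis using assms by (simp add: walk_succ)
qed

lemma last_take_Suc: "i < length xs \<Longrightarrow> last (take (Suc i) xs) = xs ! i"
  by (metis last_snoc take_Suc_conv_app_nth)

lemma walk_take: "walk E xs \<Longrightarrow> i < length xs \<Longrightarrow> walk E (take (Suc i) xs)"
  unfolding walk_def by auto

lemma walk_drop: "walk E xs \<Longrightarrow> i < length xs \<Longrightarrow> walk E (drop i xs)"
  unfolding walk_def by auto

lemma walk_in_V:
  assumes "graph V E" "walk E xs" "hd xs \<in> V" shows "set xs \<subseteq> V"
  using assms(2,3)
proof (induction xs rule: induct_list012)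
  case (3 x y zs)
  then show ?case using assms(1) by (auto simp: graph_def)
qed auto

lemma gdist_le:
  assumes "walk E xs" "hd xs = x" "last xs = y"
  shows "gdist E x y \<le> length xs - 1"
proof -
  have "length xs = Suc (length xs - 1)" using assms by (cases xs) (auto simp: walk_def)
  then show ?thesis unfolding gdist_def using assms by (intro Least_le) blast
qed

lemma gdist_ex:
  assumes "walk E xs" "hd xs = x" "last xs = y"
  shows "\<exists>ys. walk E ys \<and> hd ys = x \<and> last ys = y \<and> length ys = Suc (gdist E x y)"
proof -
  have "length xs = Suc (length xs - 1)" using assms by (cases xs) (auto simp: walk_def)
  then have "\<exists>n xs. walk E xs \<and> hd xs = x \<and> last xs = y \<and> length xs = Suc n" using assms by blast
  then show ?thesis unfolding gdist_def by (rule LeastI_ex)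
qed

lemma gdist_refl[simp]: "gdist E x x = 0"
  using gdist_le[of E "[x]" x x] by simp

lemma gdist_edge: "E x y \<Longrightarrow> gdist E x y \<le> 1"
  using gdist_le[of E "[x,y]" x y] by simp

lemma gdist_sym:
  assumes "graph V E" shows "gdist E x y = gdist E y x"
proof -
  have *: "gdist E b a \<le> gdist E a b" for a b
  proof (cases "\<exists>xs. walk E xs \<and> hd xs = a \<and> last xs = b")
    case True
    then obtain xs where xs: "walk E xs" "hd xs = a" "last xs = b" by blast
    from gdist_ex[OF xs] obtain ys where ys: "walk E ys" "hd ys = a" "last ys = b"
      "length ys = Suc (gdist E a b)" by blast
    have "walk E (rev ys)" using walk_rev[OF assms ys(1)] .
    moreover have "hd (rev ys) = b" "last (rev ys) = a" using ys
      by (auto simp: hd_rev last_rev)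
    ultimately show ?thesis using gdist_le[of E "rev ys" b a] ys by simp
  next
    case False
    have "\<not> (\<exists>xs. walk E xs \<and> hd xs = b \<and> last xs = a)"
    proof
      assume "\<exists>xs. walk E xs \<and> hd xs = b \<and> last xs = a"
      then obtain xs where "walk E xs" "hd xs = b" "last xs = a" by blast
      then have "walk E (rev xs)" "hd (rev xs) = a" "last (rev xs) = b"
        using walk_rev[OF assms] by (auto simp: hd_rev last_rev walk_def)
      with False show False by blast
    qed
    then have "(\<lambda>n. \<exists>xs. walk E xs \<and> hd xs = b \<and> last xs = a \<and> length xs = Suc n) = (\<lambda>n. False)"
      "(\<lambda>n. \<exists>xs. walk E xs \<and> hd xs = a \<and> last xs = b \<and> length xs = Suc n) = (\<lambda>n. False)"
      using False by auto
    then show ?thesis unfolding gdist_def by simp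
  qed
  show ?thesis using *[of x y] *[of y x] by simp
qed

locale cg = fixes V :: "'a set" and E :: "'a \<Rightarrow> 'a \<Rightarrow> bool"
  assumes G: "graph V E" and C: "connected_graph V E"
begin

lemma conn: "x \<in> V \<Longrightarrow> y \<in> V \<Longrightarrow> \<exists>xs. walk E xs \<and> hd xs = x \<and> last xs = y"
  using C unfolding connected_graph_def by blast

lemma geo: "x \<in> V \<Longrightarrow> y \<in> V \<Longrightarrow>
   \<exists>xs. walk E xs \<and> hd xs = x \<and> last xs = y \<and> length xs = Suc (gdist E x y)"
  using conn gdist_ex by metis

lemma sym: "gdist E x y = gdist E y x"
  using gdist_sym[OF G] .

lemma tri: assumes "x \<in> V" "y \<in> V" "z \<in> V"
  shows "gdist E x z \<le> gdist E x y + gdist E y z"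
proof -
  obtain xs where xs: "walk E xs" "hd xs = x" "last xs = y" "length xs = Suc (gdist E x y)"
    using geo assms by blast
  obtain ys where ys: "walk E ys" "hd ys = y" "last ys = z" "length ys = Suc (gdist E y z)"
    using geo assms by blast
  have "last xs = hd ys" using xs ys by simp
  note J = walk_join[OF xs(1) ys(1) this]
  have "gdist E x z \<le> length (xs @ tl ys) - 1"
    using gdist_le[OF J(1)] J(2,3) xs ys by simp
  then show ?thesis using J(5) xs ys by simp
qed

lemma geo_split:
  assumes "walk E xs" "hd xs = x" "last xs = y" "length xs = Suc (gdist E x y)" "i < length xs"
  shows "gdist E x (xs ! i) \<le> i" "gdist E (xs ! i) y + i \<le> gdist E x y"
proof -
  have "walk E (take (Suc i) xs)" using walk_take assms by blast
  moreover have "hd (take (Suc i) xs) = x" using assms by (cases xs) (auto simp: walk_def)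
  moreover have "last (take (Suc i) xs) = xs ! i"
    using assms(5) by (rule last_take_Suc)
  ultimately show "gdist E x (xs ! i) \<le> i" using gdist_le[of E "take (Suc i) xs"] assms by simp
  have "walk E (drop i xs)" using walk_drop assms by blast
  moreover have "hd (drop i xs) = xs ! i" "last (drop i xs) = y"
    using assms by (auto simp: hd_drop_conv_nth)
  ultimately have "gdist E (xs ! i) y \<le> length (drop i xs) - 1" using gdist_le[of E "drop i xs"] assms by simp
  then show "gdist E (xs ! i) y + i \<le> gdist E x y" using assms by simp
qed

lemma geo_distinct:
  assumes "walk E xs" "hd xs = x" "last xs = y" "length xs = Suc (gdist E x y)"
  shows "distinct xs"
proof (rule ccontr)
  assume "\<not> distinct xs"
  then obtain i j where ij: "i < j" "j < length xs" "xs ! i = xs ! j"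
    by (metis distinct_conv_nth linorder_neqE_nat)
  have "i < length xs" using ij by simp
  then have w1: "walk E (take (Suc i) xs)" using walk_take assms(1) by blast
  have w2: "walk E (drop j xs)" using walk_drop assms(1) ij(2) by blast
  have l1: "last (take (Suc i) xs) = xs ! i" using \<open>i < length xs\<close> by (rule last_take_Suc)
  have h2: "hd (drop j xs) = xs ! j" using ij by (simp add: hd_drop_conv_nth)
  note J = walk_join[OF w1 w2, unfolded l1 h2, OF ij(3)]
  have "hd (take (Suc i) xs) = x" using assms by (cases xs) (auto simp: walk_def)
  moreover have "last (drop j xs) = y" using assms ij by simp
  ultimately have "gdist E x y \<le> length (take (Suc i) xs @ tl (drop j xs)) - 1"
    using gdist_le[OF J(1)] J(2,3) by simp
  then show False using J(5) ij assms by simp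
qed

end


lemma walk_prefix_set:
  assumes "walk R xs" "set xs \<subseteq> L" "hd xs = x"
  shows "set xs \<subseteq> {y. \<exists>ys. walk R ys \<and> set ys \<subseteq> L \<and> hd ys = x \<and> last ys = y}"
proof
  fix w assume "w \<in> set xs"
  then obtain i where i: "i < length xs" "w = xs ! i" by (metis in_set_conv_nth)
  have "walk R (take (Suc i) xs)" using walk_take assms i by blast
  moreover have "set (take (Suc i) xs) \<subseteq> L" using assms(2) set_take_subset by fast
  moreover have "hd (take (Suc i) xs) = x" using assms by (cases xs) (auto simp: walk_def)
  moreover have "last (take (Suc i) xs) = w" using last_take_Suc i by metis
  ultimately show "w \<in> {y. \<exists>ys. walk R ys \<and> set ys \<subseteq> L \<and> hd ys = x \<and> last ys = y}" by blast
qed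

lemma M_connected_walk: "M_connected E k X \<longleftrightarrow> (\<forall>x\<in>X. \<forall>y\<in>X. \<exists>xs. walk (\<lambda>a b. real (gdist E a b) \<le> k) xs \<and> set xs \<subseteq> X \<and> hd xs = x \<and> last xs = y)"
  unfolding M_connected_def walk_def by blast

lemma M_connected_Un:
  assumes "M_connected E k A" "M_connected E k B" "p \<in> A" "p \<in> B"
  shows "M_connected E k (A \<union> B)"
  unfolding M_connected_walk
proof (intro ballI)
  let ?R = "\<lambda>a b. real (gdist E a b) \<le> k"
  have A: "\<forall>x\<in>A. \<forall>y\<in>A. \<exists>xs. walk ?R xs \<and> set xs \<subseteq> A \<union> B \<and> hd xs = x \<and> last xs = y"
    using assms(1) unfolding M_connected_walk by blast
  have B: "\<forall>x\<in>B. \<forall>y\<in>B. \<exists>xs. walk ?R xs \<and> set xs \<subseteq> A \<union> B \<and> hd xs = x \<and> last xs = y"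
    using assms(2) unfolding M_connected_walk by blast
  have J: "\<exists>xs. walk ?R xs \<and> set xs \<subseteq> A \<union> B \<and> hd xs = x \<and> last xs = y"
    if h: "\<exists>xs. walk ?R xs \<and> set xs \<subseteq> A \<union> B \<and> hd xs = x \<and> last xs = p"
       "\<exists>xs. walk ?R xs \<and> set xs \<subseteq> A \<union> B \<and> hd xs = p \<and> last xs = y" for x y
  proof -
    obtain xs ys where "walk ?R xs" "set xs \<subseteq> A \<union> B" "hd xs = x" "last xs = p"
      "walk ?R ys" "set ys \<subseteq> A \<union> B" "hd ys = p" "last ys = y" using h by blast
    moreover note W = walk_join[of ?R xs ys]
    ultimately show ?thesis by (intro exI[of _ "xs @ tl ys"]) auto
  qed
  fix x y assume "x \<in> A \<union> B" "y \<in> A \<union> B"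
  have hx: "\<exists>xs. walk ?R xs \<and> set xs \<subseteq> A \<union> B \<and> hd xs = x \<and> last xs = p"
    using \<open>x \<in> A \<union> B\<close>
  proof
    assume "x \<in> A" then show ?thesis using A assms(3) by blast
  next
    assume "x \<in> B" then show ?thesis using B assms(4) by blast
  qed
  have hy: "\<exists>xs. walk ?R xs \<and> set xs \<subseteq> A \<union> B \<and> hd xs = p \<and> last xs = y"
    using \<open>y \<in> A \<union> B\<close>
  proof
    assume "y \<in> A" then show ?thesis using A assms(3) by blast
  next
    assume "y \<in> B" then show ?thesis using B assms(4) by blast
  qed
  show "\<exists>xs. walk ?R xs \<and> set xs \<subseteq> A \<union> B \<and> hd xs = x \<and> last xs = y"
    by (rule J[OF hx hy])
qed

locale sk = cg +
  fixes x0 :: 'a and lam k :: real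
  assumes x0: "x0 \<in> V" and lam: "lam \<ge> 1" and k: "k \<ge> 1"
begin

abbreviation "blk \<equiv> is_block V E x0 lam k"
abbreviation "L \<equiv> layer V E x0 lam"
abbreviation "R \<equiv> (\<lambda>a b. real (gdist E a b) \<le> k)"

lemma layer_unique: "x \<in> L N \<Longrightarrow> x \<in> L N' \<Longrightarrow> N = N'"
proof -
  assume a: "x \<in> L N" "x \<in> L N'"
  have "real_of_int N * lam < (real_of_int N' + 1) * lam" "real_of_int N' * lam < (real_of_int N + 1) * lam"
    using a unfolding layer_def by auto
  then have "real_of_int N < real_of_int N' + 1" "real_of_int N' < real_of_int N + 1"
    using lam by (simp_all add: mult_less_cancel_right)
  then show "N = N'" by linarith
qed

lemma in_layer: assumes "x \<in> V" shows "\<exists>N. x \<in> L N"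
proof -
  let ?d = "real (gdist E x x0)"
  define N where "N = \<lceil>?d / lam\<rceil> - 1"
  have lp: "lam > 0" using lam by simp
  have "real_of_int N < ?d / lam" "?d / lam \<le> real_of_int N + 1" unfolding N_def by linarith+
  then have "real_of_int N * lam < ?d" "?d \<le> (real_of_int N + 1) * lam"
    using lp by (simp_all add: field_simps)
  then show ?thesis using assms unfolding layer_def by blast
qed

lemma block_sub: "blk B \<Longrightarrow> B \<subseteq> V"
  unfolding is_block_def layer_def by blast

lemma block_ex: assumes "x \<in> V" shows "\<exists>B. blk B \<and> x \<in> B"
proof -
  obtain N where N: "x \<in> L N" using in_layer assms by blast
  define C where "C = {y. \<exists>ys. walk R ys \<and> set ys \<subseteq> L N \<and> hd ys = x \<and> last ys = y}"
  have xC: "x \<in> C" unfolding C_def using N by (intro CollectI exI[of _ "[x]"]) auto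
  have CL: "C \<subseteq> L N" unfolding C_def by (force simp: walk_def)
  have Rsym: "R a b \<Longrightarrow> R b a" for a b using sym by simp
  have gR: "graph UNIV R" unfolding graph_def using sym by simp
  have MC: "M_connected E k C" unfolding M_connected_walk
  proof (intro ballI)
    fix y z assume "y \<in> C" "z \<in> C"
    then obtain ys zs where ys: "walk R ys" "set ys \<subseteq> L N" "hd ys = x" "last ys = y"
      and zs: "walk R zs" "set zs \<subseteq> L N" "hd zs = x" "last zs = z" unfolding C_def by blast
    have s1: "set ys \<subseteq> C" "set zs \<subseteq> C" unfolding C_def
      by (rule walk_prefix_set[OF ys(1-3)], rule walk_prefix_set[OF zs(1-3)])
    have r: "walk R (rev ys)" "hd (rev ys) = y" "last (rev ys) = x" "set (rev ys) \<subseteq> C"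
      using walk_rev[OF gR ys(1)] ys s1 by (auto simp: hd_rev last_rev walk_def)
    note J = walk_join[OF r(1) zs(1)]
    show "\<exists>xs. walk R xs \<and> set xs \<subseteq> C \<and> hd xs = y \<and> last xs = z"
      using J r zs s1 by (metis le_sup_iff subset_trans)
  qed
  have max: "B' = C" if h: "C \<subseteq> B'" "B' \<subseteq> L N" "M_connected E k B'" for B'
  proof
    show "B' \<subseteq> C"
    proof
      fix z assume "z \<in> B'"
      then obtain zs where "walk R zs" "set zs \<subseteq> B'" "hd zs = x" "last zs = z"
        using h xC unfolding M_connected_walk by blast
      then show "z \<in> C" unfolding C_def using h(2) by blast
    qed
  qed (rule h(1))
  have "blk C" unfolding is_block_def using xC CL MC max by blast
  then show ?thesis using xC by blast
qed

lemma block_unique: assumes "blk B" "blk B'" "x \<in> B" "x \<in> B'" shows "B = B'"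
proof -
  have "\<exists>N. B \<subseteq> L N \<and> M_connected E k B \<and>
     (\<forall>B''. B \<subseteq> B'' \<and> B'' \<subseteq> L N \<and> M_connected E k B'' \<longrightarrow> B'' = B)"
    using assms(1) unfolding is_block_def by (rule conjunct2)
  then obtain N where N: "B \<subseteq> L N" "M_connected E k B"
    and Nm: "\<forall>B''. B \<subseteq> B'' \<and> B'' \<subseteq> L N \<and> M_connected E k B'' \<longrightarrow> B'' = B"
    by (elim exE conjE)
  have "\<exists>N. B' \<subseteq> L N \<and> M_connected E k B' \<and>
     (\<forall>B''. B' \<subseteq> B'' \<and> B'' \<subseteq> L N \<and> M_connected E k B'' \<longrightarrow> B'' = B')"
    using assms(2) unfolding is_block_def by (rule conjunct2)
  then obtain N' where N': "B' \<subseteq> L N'" "M_connected E k B'"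
    and Nm': "\<forall>B''. B' \<subseteq> B'' \<and> B'' \<subseteq> L N' \<and> M_connected E k B'' \<longrightarrow> B'' = B'"
    by (elim exE conjE)
  have x1: "x \<in> L N" using N(1) assms(3) by (rule subsetD)
  have x2: "x \<in> L N'" using N'(1) assms(4) by (rule subsetD)
  have NN: "N = N'" using layer_unique[OF x1 x2] .
  have U: "M_connected E k (B \<union> B')" using M_connected_Un[OF N(2) N'(2) assms(3,4)] .
  have s1: "B \<union> B' \<subseteq> L N" using N(1) N'(1) NN by simp
  have s2: "B \<union> B' \<subseteq> L N'" using s1 NN by simp
  have "B \<union> B' = B" using Nm Un_upper1 s1 U by blast
  moreover have "B \<union> B' = B'" using Nm' Un_upper2 s2 U by blast
  ultimately show ?thesis by simp
qed

abbreviation "f \<equiv> skel_map V E x0 lam k"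

lemma f_block: assumes "x \<in> V" shows "blk (f x)" "x \<in> f x"
proof -
  obtain B where B: "blk B" "x \<in> B" using block_ex[OF assms] by blast
  have "\<exists>!B. blk B \<and> x \<in> B"
  proof (rule ex1I[of _ B])
    show "blk B \<and> x \<in> B" using B by simp
    show "\<And>B'. blk B' \<and> x \<in> B' \<Longrightarrow> B' = B" using block_unique B by metis
  qed
  then have "blk (f x) \<and> x \<in> f x" unfolding skel_map_def by (rule theI')
  then show "blk (f x)" "x \<in> f x" by auto
qed

lemma f_eq: assumes "blk B" "x \<in> B" shows "f x = B"
proof -
  have "x \<in> V" using block_sub[OF assms(1)] assms(2) by blast
  then show ?thesis using block_unique[OF f_block(1) assms(1) f_block(2) assms(2)] by simp
qed

end



context cg
begin

lemma cover:
  assumes "finite S" "S \<subseteq> V" "walk E P" "set P \<subseteq> V" "\<forall>w\<in>set P. \<exists>s\<in>S. real (gdist E s w) \<le> r"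
  shows "real (gdist E (hd P) (last P)) \<le> real (card S) * (2*r+1)"
  using assms
proof (induction "card S" arbitrary: S P)
  case 0
  then have "S = {}" by simp
  moreover have "hd P \<in> set P" using 0 by (cases P) (auto simp: walk_def)
  ultimately show ?case using 0 by auto
next
  case (Suc m)
  have Pne: "P \<noteq> []" using Suc(5) by (simp add: walk_def)
  have hdP: "hd P \<in> set P" using Pne by simp
  obtain s0 where s0: "s0 \<in> S" "real (gdist E s0 (hd P)) \<le> r" using Suc(7) hdP by blast
  have s0V: "s0 \<in> V" using s0(1) Suc(4) by blast
  have r0: "r \<ge> 0" using s0(2) of_nat_0_le_iff[of "gdist E s0 (hd P)"] by linarith
  define I where "I = {i. i < length P \<and> real (gdist E s0 (P ! i)) \<le> r}"
  have fI: "finite I" unfolding I_def by simp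
  have "0 \<in> I" unfolding I_def using Pne s0 by (simp add: hd_conv_nth)
  define j where "j = Max I"
  have jI: "j \<in> I" unfolding j_def using fI \<open>0 \<in> I\<close> Max_in by blast
  then have j: "j < length P" "real (gdist E s0 (P ! j)) \<le> r" unfolding I_def by auto
  have jmax: "i \<le> j" if "i \<in> I" for i unfolding j_def using fI that by simp
  have PjV: "P ! j \<in> V" using j Suc(6) nth_mem by blast
  have hdV: "hd P \<in> V" using hdP Suc(6) by blast
  have d1: "real (gdist E (hd P) (P ! j)) \<le> 2 * r"
  proof -
    have "gdist E (hd P) (P ! j) \<le> gdist E (hd P) s0 + gdist E s0 (P ! j)"
      by (rule tri[OF hdV s0V PjV])
    then have "real (gdist E (hd P) (P ! j)) \<le> real (gdist E s0 (hd P)) + real (gdist E s0 (P ! j))"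
      using sym[of "hd P" s0] by simp
    then show ?thesis using s0(2) j(2) by linarith
  qed
  show ?case
  proof (cases "Suc j = length P")
    case True
    then have "P ! j = last P" using Pne by (metis diff_Suc_1 last_conv_nth)
    have c1: "real (card S) \<ge> 1" using Suc(2) by simp
    have "1 * (2*r+1) \<le> real (card S) * (2*r+1)" by (rule mult_right_mono) (use c1 r0 in auto)
    moreover have "real (gdist E (hd P) (last P)) \<le> 2 * r" using d1 \<open>P ! j = last P\<close> by simp
    moreover have "2 * r \<le> 1 * (2*r+1)" by simp
    ultimately show ?thesis by (meson order_trans)
  next
    case False
    then have j1: "Suc j < length P" using j by simp
    define P' where "P' = drop (Suc j) P"
    have wP': "walk E P'" unfolding P'_def using walk_drop Suc(5) j1 by blast
    have sP': "set P' \<subseteq> V" unfolding P'_def using Suc(6) set_drop_subset by fast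
    have hP': "hd P' = P ! Suc j" unfolding P'_def using j1 by (simp add: hd_drop_conv_nth)
    have lP': "last P' = last P" unfolding P'_def using j1 by simp
    have cov: "\<forall>w\<in>set P'. \<exists>s\<in>S - {s0}. real (gdist E s w) \<le> r"
    proof
      fix w assume "w \<in> set P'"
      then obtain i where i: "i < length P'" "w = P' ! i" by (metis in_set_conv_nth)
      then have w: "w = P ! (Suc j + i)" "Suc j + i < length P" unfolding P'_def by auto
      have "\<not> Suc j + i \<le> j" by simp
      then have "Suc j + i \<notin> I" using jmax by blast
      then have far: "\<not> real (gdist E s0 w) \<le> r" using w unfolding I_def by auto
      have "w \<in> set P" using w by simp
      then obtain s where "s \<in> S" "real (gdist E s w) \<le> r" using Suc(7) by blast
      then show "\<exists>s\<in>S - {s0}. real (gdist E s w) \<le> r" using far by blast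
    qed
    have cS: "m = card (S - {s0})" using Suc(2) s0 Suc(3) by simp
    have fS: "finite (S - {s0})" using Suc(3) by simp
    have SV: "S - {s0} \<subseteq> V" using Suc(4) by blast
    have IH: "real (gdist E (hd P') (last P')) \<le> real (card (S - {s0})) * (2*r+1)"
      by (rule Suc(1)[OF cS fS SV wP' sP' cov])
    have e: "E (P ! j) (P ! Suc j)" using Suc(5) j1 unfolding walk_def by blast
    have PjV': "P ! Suc j \<in> V" using j1 Suc(6) nth_mem by blast
    have lV: "last P \<in> V" using Suc(6) Pne last_in_set by blast
    have "gdist E (hd P) (last P) \<le> gdist E (hd P) (P ! j) + gdist E (P ! j) (last P)"
      by (rule tri[OF hdV PjV lV])
    also have "gdist E (P ! j) (last P) \<le> gdist E (P ! j) (P ! Suc j) + gdist E (P ! Suc j) (last P)"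
      by (rule tri[OF PjV PjV' lV])
    finally have "gdist E (hd P) (last P) \<le> gdist E (hd P) (P ! j) + 1 + gdist E (P ! Suc j) (last P)"
      using gdist_edge[of E, OF e] by linarith
    then have "real (gdist E (hd P) (last P)) \<le> 2 * r + 1 + real m * (2*r+1)"
      using d1 IH hP' lP' cS by simp
    moreover have "real (card S) * (2*r+1) = 2*r+1 + real m*(2*r+1)"
      using Suc(2)[symmetric] by (simp add: algebra_simps)
    ultimately show ?thesis by linarith
  qed
qed

lemma geo_V: assumes "walk E xs" "hd xs \<in> V" shows "set xs \<subseteq> V"
  using walk_in_V[OF G assms] .

lemma walk_set_conn:
  assumes "walk E P" "set P \<subseteq> V" shows "connected_subgraph V E (set P)"
  unfolding connected_subgraph_def
proof (intro conjI ballI)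
  show "set P \<noteq> {}" using assms by (auto simp: walk_def)
  show "set P \<subseteq> V" by fact
  fix a b assume "a \<in> set P" "b \<in> set P"
  then obtain i j where i: "i < length P" "a = P ! i" and j: "j < length P" "b = P ! j"
    by (metis in_set_conv_nth)
  have w1: "walk E (rev (take (Suc i) P))" using walk_rev[OF G walk_take[OF assms(1) i(1)]] .
  have w2: "walk E (take (Suc j) P)" using walk_take[OF assms(1) j(1)] .
  have h1: "hd (rev (take (Suc i) P)) = a" using i last_take_Suc by (simp add: hd_rev)
  have l1: "last (rev (take (Suc i) P)) = hd P" using i by (cases P) (auto simp: last_rev)
  have h2: "hd (take (Suc j) P) = hd P" using j by (cases P) auto
  have l2: "last (take (Suc j) P) = b" using j last_take_Suc by simp
  note J = walk_join[OF w1 w2, unfolded l1 h2, OF refl]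
  have "set (rev (take (Suc i) P)) \<subseteq> set P" "set (take (Suc j) P) \<subseteq> set P"
    using set_take_subset by (fastforce, fast)
  then show "\<exists>xs. walk E xs \<and> set xs \<subseteq> set P \<and> hd xs = a \<and> last xs = b"
    using J h1 l2 by (intro exI[of _ "rev (take (Suc i) P) @ tl (take (Suc j) P)"]) auto
qed

lemma ball_conn:
  assumes "c \<in> V" shows "connected_subgraph V E {v\<in>V. gdist E c v \<le> rho}"
  unfolding connected_subgraph_def
proof (intro conjI ballI)
  let ?X = "{v\<in>V. gdist E c v \<le> rho}"
  show "?X \<noteq> {}" using assms by auto
  show "?X \<subseteq> V" by auto
  have g: "\<exists>xs. walk E xs \<and> set xs \<subseteq> ?X \<and> hd xs = c \<and> last xs = v" if hv: "v \<in> ?X" for v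
  proof -
    obtain xs where xs: "walk E xs" "hd xs = c" "last xs = v" "length xs = Suc (gdist E c v)"
      using geo assms hv by blast
    have "hd xs \<in> V" using xs(2) assms by simp
    then have "set xs \<subseteq> V" by (rule geo_V[OF xs(1)])
    moreover have "gdist E c w \<le> rho" if hw: "w \<in> set xs" for w
    proof -
      obtain i where "i < length xs" "w = xs ! i" using hw by (metis in_set_conv_nth)
      then have "gdist E c w \<le> i" using geo_split(1)[OF xs] by simp
      also have "i \<le> gdist E c v" using \<open>i < length xs\<close> xs by simp
      finally show ?thesis using \<open>v \<in> ?X\<close> by simp
    qed
    ultimately have "set xs \<subseteq> ?X" by blast
    then show ?thesis using xs by blast
  qed
  fix a b assume a: "a \<in> ?X" and b: "b \<in> ?X"
  obtain xs where xs: "walk E xs" "set xs \<subseteq> ?X" "hd xs = c" "last xs = a" using g a by blast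
  obtain ys where ys: "walk E ys" "set ys \<subseteq> ?X" "hd ys = c" "last ys = b" using g b by blast
  have r: "walk E (rev xs)" "hd (rev xs) = a" "last (rev xs) = c" "set (rev xs) \<subseteq> ?X"
    using walk_rev[OF G xs(1)] xs by (auto simp: hd_rev last_rev walk_def)
  note J = walk_join[OF r(1) ys(1)]
  show "\<exists>xs. walk E xs \<and> set xs \<subseteq> ?X \<and> hd xs = a \<and> last xs = b"
    using J r ys by (intro exI[of _ "rev xs @ tl ys"]) auto
qed

end



definition Dm :: "real \<Rightarrow> real \<Rightarrow> nat \<Rightarrow> nat \<Rightarrow> real" where
  "Dm lam k M n = max (2*(k + real M + 2 + lam)) (real n * (2*(3*real M + lam + 2*k + 2) + 1))"

context cg
begin

lemma chain_walk:
  assumes "walk (\<lambda>a b. real (gdist E a b) \<le> k) xs" "set xs \<subseteq> V" "k \<ge> 0"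
  shows "\<exists>P. walk E P \<and> hd P = hd xs \<and> last P = last xs \<and> (\<forall>w\<in>set P. \<exists>b\<in>set xs. real (gdist E b w) \<le> k)"
  using assms(1,2)
proof (induction xs)
  case Nil
  then show ?case by (simp add: walk_def)
next
  case (Cons b xs)
  show ?case
  proof (cases xs)
    case Nil
    then show ?thesis using assms(3) by (intro exI[of _ "[b]"]) simp
  next
    case (Cons c rest)
    have wc: "walk (\<lambda>a b. real (gdist E a b) \<le> k) xs" and bc: "real (gdist E b c) \<le> k"
      using Cons.prems(1) \<open>xs = c # rest\<close> by simp_all
    have sV: "set xs \<subseteq> V" using Cons.prems(2) by simp
    obtain P' where P': "walk E P'" "hd P' = hd xs" "last P' = last xs"
      "\<forall>w\<in>set P'. \<exists>b\<in>set xs. real (gdist E b w) \<le> k"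
      using Cons.IH[OF wc sV] by blast
    have bV: "b \<in> V" and cV: "c \<in> V" using Cons.prems(2) \<open>xs = c # rest\<close> by simp_all
    obtain g where g: "walk E g" "hd g = b" "last g = c" "length g = Suc (gdist E b c)"
      using geo[OF bV cV] by blast
    have hP': "hd P' = c" using P'(2) \<open>xs = c # rest\<close> by simp
    have lg: "last g = hd P'" using g(3) hP' by simp
    note J = walk_join[OF g(1) P'(1) lg]
    have gw: "\<exists>b'\<in>set (b # xs). real (gdist E b' w) \<le> k" if hw: "w \<in> set g" for w
    proof -
      obtain i where i: "i < length g" "w = g ! i" using hw by (metis in_set_conv_nth)
      have "gdist E b w \<le> i" using geo_split(1)[OF g i(1)] i(2) by simp
      also have "i \<le> gdist E b c" using i(1) g(4) by simp
      finally have "real (gdist E b w) \<le> k" using bc by linarith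
      then show ?thesis by simp
    qed
    have pw: "\<exists>b'\<in>set (b # xs). real (gdist E b' w) \<le> k" if hw: "w \<in> set P'" for w
      using P'(4) hw by auto
    have "\<forall>w\<in>set (g @ tl P'). \<exists>b'\<in>set (b # xs). real (gdist E b' w) \<le> k"
      using J(4) gw pw by blast
    moreover have "last (g @ tl P') = last (b # xs)" using J(3) P'(3) \<open>xs = c # rest\<close> by simp
    ultimately show ?thesis using J(1,2) g(2) by (intro exI[of _ "g @ tl P'"]) simp
  qed
qed

end

context sk
begin

lemma block_layer:
  assumes "blk B"
  obtains N where "B \<subseteq> L N" "M_connected E k B"
proof -
  have "\<exists>N. B \<subseteq> L N \<and> M_connected E k B \<and>
     (\<forall>B''. B \<subseteq> B'' \<and> B'' \<subseteq> L N \<and> M_connected E k B'' \<longrightarrow> B'' = B)"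
    using assms unfolding is_block_def by (rule conjunct2)
  then show ?thesis using that by blast
qed

lemma block_diam:
  assumes FB: "fat_bottlenecked V E M n" and B: "blk B" and x: "x \<in> B" and y: "y \<in> B"
  shows "real (gdist E x y) \<le> Dm lam k M n"
proof -
  obtain N where BN: "B \<subseteq> L N" and MC: "M_connected E k B" using block_layer[OF B] by blast
  have xL: "x \<in> L N" using BN x by blast
  have yL: "y \<in> L N" using BN y by blast
  have xV: "x \<in> V" using xL unfolding layer_def by blast
  have yV: "y \<in> V" using yL unfolding layer_def by blast
  define t where "t = real_of_int N * lam"
  have bnd: "t < real (gdist E x0 b) \<and> real (gdist E x0 b) \<le> t + lam"
    if "b \<in> B" for b
  proof -
    have "b \<in> L N" using BN that by blast
    then have "real_of_int N * lam < real (gdist E b x0) \<and> real (gdist E b x0) \<le> (real_of_int N + 1) * lam"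
      unfolding layer_def by blast
    then show ?thesis using sym[of b x0] unfolding t_def by (simp add: algebra_simps)
  qed
  have bndL: "t < real (gdist E x0 b)" if "b \<in> B" for b using bnd[OF that] by blast
  have bndU: "real (gdist E x0 b) \<le> t + lam" if "b \<in> B" for b using bnd[OF that] by blast
  have k0: "k \<ge> 0" using k by simp
  have lam0: "lam \<ge> 0" using lam by simp
  show ?thesis
  proof (cases "t < k + real M + 2")
    case True
    have "gdist E x y \<le> gdist E x x0 + gdist E x0 y" by (rule tri[OF xV x0 yV])
    then have "real (gdist E x y) \<le> real (gdist E x0 x) + real (gdist E x0 y)"
      using sym[of x x0] by simp
    also have "\<dots> \<le> 2 * k + 2 * real M + 4 + 2 * lam" using bndU[OF x] bndU[OF y] True by linarith
    also have "\<dots> = 2 * (k + real M + 2 + lam)" by simp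
    also have "\<dots> \<le> Dm lam k M n" unfolding Dm_def by simp
    finally show ?thesis .
  next
    case False
    define rho where "rho = nat \<lfloor>t - k - real M - 1\<rfloor>"
    have arg: "t - k - real M - 1 \<ge> 1" using False by linarith
    have z0: "0 \<le> \<lfloor>t - k - real M - 1\<rfloor>" using arg by simp
    have e: "real rho = real_of_int \<lfloor>t - k - real M - 1\<rfloor>" unfolding rho_def using z0 by simp
    have rho1: "real rho \<le> t - k - real M - 1"
      using e of_int_floor_le[of "t - k - real M - 1"] by linarith
    have rho2: "real rho > t - k - real M - 2"
      using e real_of_int_floor_add_one_gt[of "t - k - real M - 1"] by linarith
    define X where "X = {v\<in>V. gdist E x0 v \<le> rho}"
    let ?R = "\<lambda>a b. real (gdist E a b) \<le> k"
    obtain xs where xs: "walk ?R xs" "set xs \<subseteq> B" "hd xs = x" "last xs = y"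
      using MC x y unfolding M_connected_walk by blast
    have xsV: "set xs \<subseteq> V" using xs(2) BN unfolding layer_def by blast
    obtain P where P: "walk E P" "hd P = x" "last P = y" "\<forall>w\<in>set P. \<exists>b\<in>set xs. real (gdist E b w) \<le> k"
      using chain_walk[OF xs(1) xsV k0] xs(3,4) by blast
    have PV: "set P \<subseteq> V" using walk_in_V[OF G P(1)] P(2) xV by simp
    define Y where "Y = set P"
    have Ybnd: "t - k < real (gdist E x0 w) \<and> real (gdist E x0 w) \<le> t + lam + k"
      if wY: "w \<in> Y" for w
    proof -
      obtain b where b: "b \<in> set xs" "real (gdist E b w) \<le> k" using P(4) wY unfolding Y_def by blast
      have bB: "b \<in> B" using b(1) xs(2) by blast
      have bV: "b \<in> V" using b(1) xsV by blast
      have wV: "w \<in> V" using wY PV unfolding Y_def by blast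
      have t1: "gdist E x0 w \<le> gdist E x0 b + gdist E b w" by (rule tri[OF x0 bV wV])
      have t2: "gdist E x0 b \<le> gdist E x0 w + gdist E w b" by (rule tri[OF x0 wV bV])
      have "real (gdist E x0 w) \<le> real (gdist E x0 b) + real (gdist E b w)" using t1 by simp
      moreover have "real (gdist E x0 b) \<le> real (gdist E x0 w) + real (gdist E b w)"
        using t2 sym[of w b] by simp
      ultimately show ?thesis using bndL[OF bB] bndU[OF bB] b(2) by (intro conjI) linarith+
    qed
    have YbL: "t - k < real (gdist E x0 w)" if "w \<in> Y" for w using Ybnd[OF that] by blast
    have YbU: "real (gdist E x0 w) \<le> t + lam + k" if "w \<in> Y" for w using Ybnd[OF that] by blast
    have cX: "connected_subgraph V E X" unfolding X_def by (rule ball_conn[OF x0])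
    have cY: "connected_subgraph V E Y" unfolding Y_def by (rule walk_set_conn[OF P(1) PV])
    have MD: "M_disjoint E M X Y" unfolding M_disjoint_def
    proof (intro ballI)
      fix u w assume uX: "u \<in> X" and wY: "w \<in> Y"
      have uV: "u \<in> V" and ur: "gdist E x0 u \<le> rho" using uX unfolding X_def by auto
      have wV: "w \<in> V" using wY PV unfolding Y_def by blast
      have "gdist E x0 w \<le> gdist E x0 u + gdist E u w" by (rule tri[OF x0 uV wV])
      then have "real (gdist E x0 w) \<le> real rho + real (gdist E u w)" using ur by linarith
      then have "real (gdist E u w) > real M" using YbL[OF wY] rho1 by linarith
      then show "gdist E u w > M" by simp
    qed
    obtain S where S: "S \<subseteq> V - (X \<union> Y)" "finite S" "card S = n"
      and SP: "\<forall>xs. gpath E xs \<and> hd xs \<in> X \<and> last xs \<in> Y \<longrightarrow> (\<exists>v\<in>set xs. v \<in> nbhd V E M S)"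
      using FB cX cY MD unfolding fat_bottlenecked_def by blast
    define R' where "R' = 3 * real M + lam + 2 * k + 2"
    have covr: "\<forall>p\<in>set P. \<exists>s\<in>S. real (gdist E s p) \<le> R'"
    proof
      fix p assume pP: "p \<in> set P"
      have pV: "p \<in> V" using pP PV by blast
      obtain g where g: "walk E g" "hd g = x0" "last g = p" "length g = Suc (gdist E x0 p)"
        using geo[OF x0 pV] by blast
      have "distinct g" by (rule geo_distinct[OF g])
      then have gp: "gpath E g" using g(1) unfolding gpath_def by simp
      have x0X: "x0 \<in> X" unfolding X_def using x0 by simp
      have pY: "p \<in> Y" unfolding Y_def using pP .
      obtain v where v: "v \<in> set g" "v \<in> nbhd V E M S" using SP gp g(2,3) x0X pY by blast
      obtain s where s: "s \<in> S" "gdist E s v < M" using v(2) unfolding nbhd_def by blast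
      obtain i where i: "i < length g" "v = g ! i" using v(1) by (metis in_set_conv_nth)
      have gi1: "gdist E x0 v \<le> i" using geo_split(1)[OF g i(1)] i(2) by simp
      have gi2: "gdist E v p + i \<le> gdist E x0 p" using geo_split(2)[OF g i(1)] i(2) by simp
      have sV: "s \<in> V" and sX: "s \<notin> X" using S(1) s(1) by blast+
      then have srho: "gdist E x0 s > rho" unfolding X_def by simp
      have vV: "v \<in> V" using walk_in_V[OF G g(1)] g(2) x0 v(1) by auto
      have "gdist E x0 s \<le> gdist E x0 v + gdist E v s" by (rule tri[OF x0 vV sV])
      then have A1: "rho < i + M" using srho gi1 s(2) sym[of v s] by linarith
      have "gdist E s p \<le> gdist E s v + gdist E v p" by (rule tri[OF sV vV pV])
      then have A2: "gdist E s p + i < M + gdist E x0 p" using gi2 s(2) by linarith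
      have A3: "real (gdist E s p) + real i < real M + real (gdist E x0 p)" using A2
        by (metis of_nat_add of_nat_less_iff)
      have A4: "real rho < real i + real M" using A1 by (metis of_nat_add of_nat_less_iff)
      have "real (gdist E s p) \<le> R'" unfolding R'_def using A3 A4 YbU[OF pY] rho2 by linarith
      then show "\<exists>s\<in>S. real (gdist E s p) \<le> R'" using s(1) by blast
    qed
    have SV: "S \<subseteq> V" using S(1) by blast
    have "real (gdist E (hd P) (last P)) \<le> real (card S) * (2*R'+1)"
      by (rule cover[OF S(2) SV P(1) PV covr])
    then have "real (gdist E x y) \<le> real n * (2*(3*real M + lam + 2*k + 2) + 1)"
      using P(2,3) S(3) unfolding R'_def by simp
    also have "\<dots> \<le> Dm lam k M n" unfolding Dm_def by simp
    finally show ?thesis .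
  qed
qed

end



context sk
begin

abbreviation "Esk \<equiv> skel_E V E x0 lam k"

lemma map_walk:
  assumes "walk E xs" "set xs \<subseteq> V"
  shows "\<exists>Bs. walk Esk Bs \<and> hd Bs = f (hd xs) \<and> last Bs = f (last xs) \<and> length Bs \<le> length xs"
  using assms
proof (induction xs)
  case Nil
  then show ?case by (simp add: walk_def)
next
  case (Cons x xs)
  show ?case
  proof (cases xs)
    case Nil
    then show ?thesis by (intro exI[of _ "[f x]"]) simp
  next
    case (Cons y rest)
    have e: "E x y" and wy: "walk E xs" using Cons.prems(1) \<open>xs = y # rest\<close> by simp_all
    have sV: "set xs \<subseteq> V" using Cons.prems(2) by simp
    obtain Bs where Bs: "walk Esk Bs" "hd Bs = f (hd xs)" "last Bs = f (last xs)" "length Bs \<le> length xs"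
      using Cons.IH[OF wy sV] by blast
    have xV: "x \<in> V" and yV: "y \<in> V" using Cons.prems(2) \<open>xs = y # rest\<close> by simp_all
    have hB: "hd Bs = f y" using Bs(2) \<open>xs = y # rest\<close> by simp
    show ?thesis
    proof (cases "f x = f y")
      case True
      then show ?thesis using Bs hB \<open>xs = y # rest\<close> by (intro exI[of _ Bs]) simp
    next
      case False
      have "Esk (f x) (f y)" unfolding skel_E_def
        using f_block[OF xV] f_block[OF yV] e by blast
      then have w2: "walk Esk [f x, f y]" by simp
      have "last [f x, f y] = hd Bs" using hB by simp
      note J = walk_join[OF w2 Bs(1) this]
      have "Bs \<noteq> []" using Bs(1) by (simp add: walk_def)
      then show ?thesis using J Bs \<open>xs = y # rest\<close>
        by (intro exI[of _ "[f x, f y] @ tl Bs"]) auto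
    qed
  qed
qed

lemma walk_blocks: "walk Esk Bs \<Longrightarrow> blk (hd Bs) \<Longrightarrow> C \<in> set Bs \<Longrightarrow> blk C"
proof (induction Bs)
  case Nil
  then show ?case by simp
next
  case (Cons B Bs)
  show ?case
  proof (cases Bs)
    case Nil
    then show ?thesis using Cons.prems by simp
  next
    case (Cons B' rest)
    have e: "Esk B B'" and wB: "walk Esk Bs" using Cons.prems(1) \<open>Bs = B' # rest\<close> by simp_all
    have "blk B'" using e unfolding skel_E_def by blast
    then have "blk (hd Bs)" using \<open>Bs = B' # rest\<close> by simp
    then show ?thesis using Cons.IH[OF wB] Cons.prems(2,3) by auto
  qed
qed

lemma walk_blocks_last: "walk Esk Bs \<Longrightarrow> blk (hd Bs) \<Longrightarrow> blk (last Bs)"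
  using walk_blocks[of Bs "last Bs"] by (simp add: walk_def)

lemma skel_walk_bound:
  assumes "walk Esk Bs" "blk (hd Bs)" "u \<in> hd Bs" "v \<in> last Bs"
    and D: "\<And>B u v. blk B \<Longrightarrow> u \<in> B \<Longrightarrow> v \<in> B \<Longrightarrow> real (gdist E u v) \<le> D"
  shows "real (gdist E u v) \<le> (D + 1) * real (length Bs - 1) + D"
  using assms(1-4)
proof (induction Bs arbitrary: u)
  case Nil
  then show ?case by (simp add: walk_def)
next
  case (Cons B Bs)
  show ?case
  proof (cases Bs)
    case Nil
    then show ?thesis using D[of B u v] Cons.prems by simp
  next
    case (Cons B' rest)
    have e: "Esk B B'" and wB: "walk Esk Bs" using Cons.prems(1) \<open>Bs = B' # rest\<close> by simp_all
    then have bB: "blk B" "blk B'" and ab: "\<exists>a\<in>B. \<exists>b\<in>B'. E a b" unfolding skel_E_def by blast+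
    obtain a b where a: "a \<in> B" and b: "b \<in> B'" and eab: "E a b" using ab by blast
    have hB: "hd Bs = B'" using \<open>Bs = B' # rest\<close> by simp
    have vl: "v \<in> last Bs" using Cons.prems(4) \<open>Bs = B' # rest\<close> by simp
    have IH: "real (gdist E b v) \<le> (D + 1) * real (length Bs - 1) + D"
      using Cons.IH[OF wB] hB bB(2) b vl by simp
    have u: "u \<in> B" using Cons.prems(3) by simp
    have uV: "u \<in> V" using block_sub[OF bB(1)] u by blast
    have aV: "a \<in> V" using block_sub[OF bB(1)] a by blast
    have bV: "b \<in> V" using block_sub[OF bB(2)] b by blast
    have "blk (last Bs)" using walk_blocks_last[OF wB] hB bB(2) by simp
    then have vV: "v \<in> V" using block_sub vl by blast
    have "gdist E u v \<le> gdist E u a + gdist E a v" by (rule tri[OF uV aV vV])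
    also have "gdist E a v \<le> gdist E a b + gdist E b v" by (rule tri[OF aV bV vV])
    finally have "gdist E u v \<le> gdist E u a + gdist E a b + gdist E b v" by simp
    then have "real (gdist E u v) \<le> real (gdist E u a) + real (gdist E a b) + real (gdist E b v)" by simp
    moreover have "real (gdist E u a) \<le> D" by (rule D[OF bB(1) u a])
    moreover have "real (gdist E a b) \<le> 1" using gdist_edge[of E, OF eab] by simp
    ultimately have "real (gdist E u v) \<le> D + 1 + ((D + 1) * real (length Bs - 1) + D)" using IH by linarith
    moreover have "(D + 1) * real (length (B # Bs) - 1) = D + 1 + (D + 1) * real (length Bs - 1)"
      using \<open>Bs = B' # rest\<close> by (simp add: algebra_simps)
    ultimately show ?thesis by linarith
  qed
qed


lemma qi:
  assumes FB: "fat_bottlenecked V E M n"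
  shows "quasi_isometry V (gdist E) (skel_V V E x0 lam k) (gdist Esk) f"
proof -
  define D where "D = Dm lam k M n"
  have D0: "D \<ge> 0" unfolding D_def Dm_def using k lam by simp
  have Dd: "real (gdist E u v) \<le> D" if "blk B" "u \<in> B" "v \<in> B" for B u v
    using block_diam[OF FB that] unfolding D_def .
  have img: "f ` V \<subseteq> skel_V V E x0 lam k" unfolding skel_V_def using f_block by blast
  have main: "real (gdist E x y) / (D+1) - (D+1) \<le> real (gdist Esk (f x) (f y)) \<and>
      real (gdist Esk (f x) (f y)) \<le> (D+1) * real (gdist E x y) + (D+1)"
    if xV: "x \<in> V" and yV: "y \<in> V" for x y
  proof -
    obtain xs where xs: "walk E xs" "hd xs = x" "last xs = y" "length xs = Suc (gdist E x y)"
      using geo[OF xV yV] by blast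
    have sV: "set xs \<subseteq> V" using walk_in_V[OF G xs(1)] xs(2) xV by simp
    obtain Bs where Bs: "walk Esk Bs" "hd Bs = f (hd xs)" "last Bs = f (last xs)" "length Bs \<le> length xs"
      using map_walk[OF xs(1) sV] by blast
    have "gdist Esk (f x) (f y) \<le> length Bs - 1" using gdist_le[OF Bs(1)] Bs(2,3) xs(2,3) by simp
    then have up: "gdist Esk (f x) (f y) \<le> gdist E x y" using Bs(4) xs(4) by simp
    have "hd Bs = f x" "last Bs = f y" using Bs(2,3) xs(2,3) by simp_all
    then obtain Cs where Cs: "walk Esk Cs" "hd Cs = f x" "last Cs = f y"
      "length Cs = Suc (gdist Esk (f x) (f y))"
      using gdist_ex[OF Bs(1)] by blast
    have hC: "blk (hd Cs)" using Cs(2) f_block[OF xV] by simp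
    have uC: "x \<in> hd Cs" using Cs(2) f_block[OF xV] by simp
    have vC: "y \<in> last Cs" using Cs(3) f_block[OF yV] by simp
    have low: "real (gdist E x y) \<le> (D + 1) * real (length Cs - 1) + D"
      by (rule skel_walk_bound[OF Cs(1) hC uC vC Dd])
    define d where "d = real (gdist E x y)"
    define d' where "d' = real (gdist Esk (f x) (f y))"
    have low': "d \<le> (D + 1) * d' + D" using low Cs(4) unfolding d_def d'_def by simp
    have eq: "(d' + 1) * (D+1) = (D+1) * d' + D + 1" by (simp add: algebra_simps)
    have "d \<le> (d' + 1) * (D+1)" using low' eq by linarith
    then have "d / (D+1) \<le> d' + 1" using D0 by (simp add: pos_divide_le_eq)
    then have A: "d / (D+1) - (D+1) \<le> d'" using D0 by linarith
    have d0: "d \<ge> 0" unfolding d_def by simp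
    have "1 * d \<le> (D+1) * d" by (rule mult_right_mono) (use D0 d0 in auto)
    moreover have "d' \<le> d" using up unfolding d_def d'_def by simp
    ultimately have B: "d' \<le> (D+1) * d + (D+1)" using D0 by linarith
    show ?thesis using A B unfolding d_def d'_def by blast
  qed
  have surj: "\<exists>x\<in>V. real (gdist Esk (f x) B) \<le> D + 1" if hB: "B \<in> skel_V V E x0 lam k" for B
  proof -
    have bB: "blk B" using hB unfolding skel_V_def by simp
    then obtain x where x: "x \<in> B" unfolding is_block_def by blast
    have xV: "x \<in> V" using block_sub[OF bB] x by blast
    have "f x = B" by (rule f_eq[OF bB x])
    then show ?thesis using xV D0 by (intro bexI[of _ x]) simp_all
  qed
  have L1: "D + 1 \<ge> 1" using D0 by simp
  have C0: "D + 1 \<ge> 0" using D0 by simp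
  show ?thesis unfolding quasi_isometry_def
    using img main surj L1 C0 by (intro conjI exI[of _ "D+1"]) auto
qed

end

theorem corollary7:
  fixes V :: "'a set" and E :: "'a \<Rightarrow> 'a \<Rightarrow> bool"
  assumes "graph V E" and "connected_graph V E" and "unbounded_graph V E"
    and "coarsely_bottlenecked V E"
    and "x0 \<in> V" and "(lam::real) \<ge> 1" and "(k::real) \<ge> 1"
  shows "quasi_isometry V (gdist E) (skel_V V E x0 lam k) (gdist (skel_E V E x0 lam k))
           (skel_map V E x0 lam k)"
proof -
  obtain M n where FB: "fat_bottlenecked V E M n"
    using assms(4) unfolding coarsely_bottlenecked_def by blast
  interpret sk V E x0 lam k
    by (unfold_locales) (use assms in auto)
  show ?thesis by (rule qi[OF FB])
qed

end
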